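(* Consider a series system of two components $c_1,c_2$ (so $\phi(s)=1$ iff $s_1=s_2=1$) with independent states, perfect inspections ($y_k=s_k$), equal repair costs $C_{R,1}=C_{R,2}=C_R$ and $0\le C_R\le C_F/2$. Then for $\{i,j\}=\{1,2\}$, $$L^L_\omega(i)=p_iC_R+\min\{C_R,\;p_jC_F\}.$$ Moreover, if both $p_1$ and $p_2$ are at most $\tilde p=C_R/C_F$, then the component with the larger marginal failure probability has the (weakly) larger local value of information: $p_i\ge p_j\Rightarrow \mathrm{VoI}_L(i)\ge\mathrm{VoI}_L(j)$.
   Context: Components $c_1,c_2$ have binary states $s_k\in\{0,1\}$ ($1$: working, $0$: failed) with marginal failure probabilities $p_k=\mathbb{P}[s_k=0]$; $C_F>0$ is the cost of system failure. Local metric: an action is $A=(a_1,a_2)\in\{0,1\}^2$ ($a_k=1$: replace $c_k$); replacement is perfect, so the post-action state has $s'_k=1$ if $a_k=1$ and $s'_k=s_k$ otherwise. The loss is $\mathcal{L}(s',A)=C_F(1-\phi(s'))+\sum_k a_kC_{R,k}$. The prior loss is $L^L_\pi=\min_A\mathbb{E}[\mathcal{L}(s',A)]$; inspecting $c_i$ gives observation $y_i$, with posterior loss $L^L_{\omega|y_i=c}=\min_A\mathbb{E}[\mathcal{L}(s',A)\mid y_i=c]$ and expected posterior loss $L^L_\omega(i)=\mathbb{P}[y_i=0]L^L_{\omega|y_i=0}+\mathbb{P}[y_i=1]L^L_{\omega|y_i=1}$ (terms with zero probability omitted); $\mathrm{VoI}_L(i)=L^L_\pi-L^L_\omega(i)$.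 *)

theory Defs
  imports Complex_Main
begin

(* A system state / action is a pair (component 1, component 2) of booleans.
   State: True = working, False = failed.  Action: True = replace. *)
type_synonym state2 = "bool \<times> bool"
type_synonym action2 = "bool \<times> bool"

definition comp :: "nat \<Rightarrow> bool \<times> bool \<Rightarrow> bool" where
  "comp k x = (if k = 1 then fst x else snd x)"

definition series_phi :: "state2 \<Rightarrow> bool" where
  "series_phi s = (fst s \<and> snd s)"

definition post_state :: "state2 \<Rightarrow> action2 \<Rightarrow> state2" where
  "post_state s A = (fst A \<or> fst s, snd A \<or> snd s)"

definition loss :: "(state2 \<Rightarrow> bool) \<Rightarrow> real \<Rightarrow> real \<Rightarrow> real \<Rightarrow> state2 \<Rightarrow> action2 \<Rightarrow> real" where
  "loss phi CF CR1 CR2 s A =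
     CF * (if phi (post_state s A) then 0 else 1)
     + (if fst A then CR1 else 0) + (if snd A then CR2 else 0)"

definition indep_prob :: "(nat \<Rightarrow> real) \<Rightarrow> state2 \<Rightarrow> real" where
  "indep_prob p s = (if fst s then 1 - p 1 else p 1) * (if snd s then 1 - p 2 else p 2)"

definition prior_loss :: "(state2 \<Rightarrow> real) \<Rightarrow> (state2 \<Rightarrow> bool) \<Rightarrow> real \<Rightarrow> real \<Rightarrow> real \<Rightarrow> real" where
  "prior_loss P phi CF CR1 CR2 =
     Min ((\<lambda>A. \<Sum>s\<in>UNIV. P s * loss phi CF CR1 CR2 s A) ` UNIV)"

(* perfect inspection of component i: y_i = s_i *)
definition obs_prob :: "(state2 \<Rightarrow> real) \<Rightarrow> nat \<Rightarrow> bool \<Rightarrow> real" where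
  "obs_prob P i c = (\<Sum>s\<in>{s. comp i s = c}. P s)"

definition post_loss :: "(state2 \<Rightarrow> real) \<Rightarrow> (state2 \<Rightarrow> bool) \<Rightarrow> real \<Rightarrow> real \<Rightarrow> real \<Rightarrow> nat \<Rightarrow> bool \<Rightarrow> real" where
  "post_loss P phi CF CR1 CR2 i c =
     Min ((\<lambda>A. (\<Sum>s\<in>{s. comp i s = c}. P s * loss phi CF CR1 CR2 s A) / obs_prob P i c) ` UNIV)"

definition exp_post_loss :: "(state2 \<Rightarrow> real) \<Rightarrow> (state2 \<Rightarrow> bool) \<Rightarrow> real \<Rightarrow> real \<Rightarrow> real \<Rightarrow> nat \<Rightarrow> real" where
  "exp_post_loss P phi CF CR1 CR2 i =
     (\<Sum>c\<in>UNIV. if obs_prob P i c = 0 then 0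
                 else obs_prob P i c * post_loss P phi CF CR1 CR2 i c)"

definition VoI_L :: "(state2 \<Rightarrow> real) \<Rightarrow> (state2 \<Rightarrow> bool) \<Rightarrow> real \<Rightarrow> real \<Rightarrow> real \<Rightarrow> nat \<Rightarrow> real" where
  "VoI_L P phi CF CR1 CR2 i = prior_loss P phi CF CR1 CR2 - exp_post_loss P phi CF CR1 CR2 i"

end

theory Submission imports Defs begin
lemma U2: "(UNIV :: (bool\<times>bool) set) = {(True,True),(True,False),(False,True),(False,False)}" by auto
lemma S1: "{s::bool\<times>bool. comp 1 s = c} = {(c,True),(c,False)}" by (auto simp: comp_def)
lemma S2: "{s::bool\<times>bool. comp 2 s = c} = {(True,c),(False,c)}" by (auto simp: comp_def)
lemma Ub: "(UNIV :: bool set) = {True, False}" by auto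

lemma E1: assumes "0 \<le> p 1" "p 1 \<le> 1" "0 \<le> p 2" "p 2 \<le> 1"
    and "CF > 0" and "0 \<le> CR" and "CR \<le> CF / 2"
  shows "exp_post_loss (indep_prob p) series_phi CF CR CR 1 = p 1 * CR + min CR (p 2 * CF)"
proof -
  have o0: "obs_prob (indep_prob p) 1 False = p 1" unfolding obs_prob_def S1 indep_prob_def by (simp add: algebra_simps)
  have o1: "obs_prob (indep_prob p) 1 True = 1 - p 1" unfolding obs_prob_def S1 indep_prob_def by (simp add: algebra_simps)
  have l0: "p 1 \<noteq> 0 \<Longrightarrow> post_loss (indep_prob p) series_phi CF CR CR 1 False = CR + min CR (p 2 * CF)"
  proof -
    assume nz: "p 1 \<noteq> 0"
    define f where "f A = (\<Sum>s\<in>{s. comp 1 s = False}. indep_prob p s * loss series_phi CF CR CR s A) / obs_prob (indep_prob p) 1 False" for A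
    have v0: "f (True,True) = CR + CR" unfolding f_def o0 o1 S1 indep_prob_def loss_def post_state_def series_phi_def using nz by (simp add: field_simps)
    have v1: "f (False,True) = CR + CF" unfolding f_def o0 o1 S1 indep_prob_def loss_def post_state_def series_phi_def using nz by (simp add: field_simps)
    have v2: "f (True,False) = CR + CF * p 2" unfolding f_def o0 o1 S1 indep_prob_def loss_def post_state_def series_phi_def using nz by (simp add: field_simps)
    have v3: "f (False,False) = CF" unfolding f_def o0 o1 S1 indep_prob_def loss_def post_state_def series_phi_def using nz by (simp add: field_simps)
    have "post_loss (indep_prob p) series_phi CF CR CR 1 False = Min (f ` UNIV)"
      unfolding post_loss_def f_def by simp
    also have "\<dots> = Min {CR + CR, CR + CF, CR + CF * p 2, CF}" unfolding U2 using v0 v1 v2 v3 by simp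
    also have "\<dots> = CR + min CR (p 2 * CF)" using assms mult_left_le[of "p 2" CF] by (cases "p 2 = 1") (simp_all add: min_def algebra_simps)
    finally show ?thesis .
  qed
  have l1: "p 1 \<noteq> 1 \<Longrightarrow> post_loss (indep_prob p) series_phi CF CR CR 1 True = min CR (p 2 * CF)"
  proof -
    assume nz: "p 1 \<noteq> 1"
    define f where "f A = (\<Sum>s\<in>{s. comp 1 s = True}. indep_prob p s * loss series_phi CF CR CR s A) / obs_prob (indep_prob p) 1 True" for A
    have v0: "f (True,True) = CR + CR" unfolding f_def o0 o1 S1 indep_prob_def loss_def post_state_def series_phi_def using nz by (simp add: field_simps)
    have v1: "f (False,True) = CR" unfolding f_def o0 o1 S1 indep_prob_def loss_def post_state_def series_phi_def using nz by (simp add: field_simps)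
    have v2: "f (True,False) = CR + CF * p 2" unfolding f_def o0 o1 S1 indep_prob_def loss_def post_state_def series_phi_def using nz by (simp add: field_simps)
    have v3: "f (False,False) = CF * p 2" unfolding f_def o0 o1 S1 indep_prob_def loss_def post_state_def series_phi_def using nz by (simp add: field_simps)
    have "post_loss (indep_prob p) series_phi CF CR CR 1 True = Min (f ` UNIV)"
      unfolding post_loss_def f_def by simp
    also have "\<dots> = Min {CR + CR, CR, CR + CF * p 2, CF * p 2}" unfolding U2 using v0 v1 v2 v3 by simp
    also have "\<dots> = min CR (p 2 * CF)" using assms mult_left_le[of "p 2" CF] by (cases "p 2 = 1") (simp_all add: min_def algebra_simps)
    finally show ?thesis .
  qed
  have "exp_post_loss (indep_prob p) series_phi CF CR CR 1 = (if p 1 = 1 then 0 else (1 - p 1) * post_loss (indep_prob p) series_phi CF CR CR 1 True) + (if p 1 = 0 then 0 else p 1 * post_loss (indep_prob p) series_phi CF CR CR 1 False)"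
    unfolding exp_post_loss_def Ub using o0 o1 by simp
  then show ?thesis using l0 l1 by (auto simp: algebra_simps)
qed
lemma E2: assumes "0 \<le> p 2" "p 2 \<le> 1" "0 \<le> p 1" "p 1 \<le> 1"
    and "CF > 0" and "0 \<le> CR" and "CR \<le> CF / 2"
  shows "exp_post_loss (indep_prob p) series_phi CF CR CR 2 = p 2 * CR + min CR (p 1 * CF)"
proof -
  have o0: "obs_prob (indep_prob p) 2 False = p 2" unfolding obs_prob_def S2 indep_prob_def by (simp add: algebra_simps)
  have o1: "obs_prob (indep_prob p) 2 True = 1 - p 2" unfolding obs_prob_def S2 indep_prob_def by (simp add: algebra_simps)
  have l0: "p 2 \<noteq> 0 \<Longrightarrow> post_loss (indep_prob p) series_phi CF CR CR 2 False = CR + min CR (p 1 * CF)"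
  proof -
    assume nz: "p 2 \<noteq> 0"
    define f where "f A = (\<Sum>s\<in>{s. comp 2 s = False}. indep_prob p s * loss series_phi CF CR CR s A) / obs_prob (indep_prob p) 2 False" for A
    have v0: "f (True,True) = CR + CR" unfolding f_def o0 o1 S2 indep_prob_def loss_def post_state_def series_phi_def using nz by (simp add: field_simps)
    have v1: "f (False,True) = CR + CF * p 1" unfolding f_def o0 o1 S2 indep_prob_def loss_def post_state_def series_phi_def using nz by (simp add: field_simps)
    have v2: "f (True,False) = CR + CF" unfolding f_def o0 o1 S2 indep_prob_def loss_def post_state_def series_phi_def using nz by (simp add: field_simps)
    have v3: "f (False,False) = CF" unfolding f_def o0 o1 S2 indep_prob_def loss_def post_state_def series_phi_def using nz by (simp add: field_simps)
    have "post_loss (indep_prob p) series_phi CF CR CR 2 False = Min (f ` UNIV)"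
      unfolding post_loss_def f_def by simp
    also have "\<dots> = Min {CR + CR, CR + CF * p 1, CR + CF, CF}" unfolding U2 using v0 v1 v2 v3 by simp
    also have "\<dots> = CR + min CR (p 1 * CF)" using assms mult_left_le[of "p 1" CF] by (cases "p 1 = 1") (simp_all add: min_def algebra_simps)
    finally show ?thesis .
  qed
  have l1: "p 2 \<noteq> 1 \<Longrightarrow> post_loss (indep_prob p) series_phi CF CR CR 2 True = min CR (p 1 * CF)"
  proof -
    assume nz: "p 2 \<noteq> 1"
    define f where "f A = (\<Sum>s\<in>{s. comp 2 s = True}. indep_prob p s * loss series_phi CF CR CR s A) / obs_prob (indep_prob p) 2 True" for A
    have v0: "f (True,True) = CR + CR" unfolding f_def o0 o1 S2 indep_prob_def loss_def post_state_def series_phi_def using nz by (simp add: field_simps)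
    have v1: "f (False,True) = CR + CF * p 1" unfolding f_def o0 o1 S2 indep_prob_def loss_def post_state_def series_phi_def using nz by (simp add: field_simps)
    have v2: "f (True,False) = CR" unfolding f_def o0 o1 S2 indep_prob_def loss_def post_state_def series_phi_def using nz by (simp add: field_simps)
    have v3: "f (False,False) = CF * p 1" unfolding f_def o0 o1 S2 indep_prob_def loss_def post_state_def series_phi_def using nz by (simp add: field_simps)
    have "post_loss (indep_prob p) series_phi CF CR CR 2 True = Min (f ` UNIV)"
      unfolding post_loss_def f_def by simp
    also have "\<dots> = Min {CR + CR, CR + CF * p 1, CR, CF * p 1}" unfolding U2 using v0 v1 v2 v3 by simp
    also have "\<dots> = min CR (p 1 * CF)" using assms mult_left_le[of "p 1" CF] by (cases "p 1 = 1") (simp_all add: min_def algebra_simps)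
    finally show ?thesis .
  qed
  have "exp_post_loss (indep_prob p) series_phi CF CR CR 2 = (if p 2 = 1 then 0 else (1 - p 2) * post_loss (indep_prob p) series_phi CF CR CR 2 True) + (if p 2 = 0 then 0 else p 2 * post_loss (indep_prob p) series_phi CF CR CR 2 False)"
    unfolding exp_post_loss_def Ub using o0 o1 by simp
  then show ?thesis using l0 l1 by (auto simp: algebra_simps)
qed

theorem mainTheorem5:
  fixes p :: "nat \<Rightarrow> real" and CF CR :: real
  assumes "0 \<le> p 1" "p 1 \<le> 1" "0 \<le> p 2" "p 2 \<le> 1"
    and "CF > 0" and "0 \<le> CR" and "CR \<le> CF / 2"
  shows "(\<forall>i j. {i, j} = {1, 2::nat} \<longrightarrow>
            exp_post_loss (indep_prob p) series_phi CF CR CR i = p i * CR + min CR (p j * CF))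
       \<and> ((p 1 \<le> CR / CF \<and> p 2 \<le> CR / CF) \<longrightarrow>
            (\<forall>i j. {i, j} = {1, 2::nat} \<longrightarrow> p i \<ge> p j \<longrightarrow>
               VoI_L (indep_prob p) series_phi CF CR CR i \<ge> VoI_L (indep_prob p) series_phi CF CR CR j))"
proof -
  have ij: "{i, j} = {1, 2::nat} \<Longrightarrow> (i = 1 \<and> j = 2) \<or> (i = 2 \<and> j = 1)" for i j
    by (metis doubleton_eq_iff)
  note e1 = E1[OF assms] and e2 = E2[OF assms(3,4,1,2,5,6,7)]
  show ?thesis
  proof (intro conjI impI allI)
    fix i j :: nat assume "{i, j} = {1, 2}"
    then show "exp_post_loss (indep_prob p) series_phi CF CR CR i = p i * CR + min CR (p j * CF)"
      using ij[OF \<open>{i, j} = {1, 2}\<close>] e1 e2 by auto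
  next
    fix i j :: nat assume h: "p 1 \<le> CR / CF \<and> p 2 \<le> CR / CF" and ij2: "{i, j} = {1, 2}" and pij: "p j \<le> p i"
    have a1: "p 1 * CF \<le> CR" "p 2 * CF \<le> CR" using h assms(5) by (auto simp: field_simps)
    have k: "(p i - p j) * CR \<le> (p i - p j) * CF" using pij assms
      by (intro mult_left_mono) auto
    from ij[OF ij2] show "VoI_L (indep_prob p) series_phi CF CR CR j \<le> VoI_L (indep_prob p) series_phi CF CR CR i"
      unfolding VoI_L_def using e1 e2 a1 k by (auto simp: min_def algebra_simps)
  qed
qed

end
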